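(* Let $b>0$, let $h:[0,b]\to[0,\infty)$ be a concave function that is not identically zero, let $\alpha,\beta>0$, and let $\mathrm{g}_\alpha(h)=\frac{\int_0^b t h(t)^\alpha dt}{\int_0^b h(t)^\alpha dt}$. Then there exist $\gamma<\delta$ and $c>0$ such that the function $g(t)=c(\delta-t)$ on $[\gamma,\delta]$ satisfies: (i) $g(\mathrm{g}_\alpha(h))=h(\mathrm{g}_\alpha(h))$; (ii) $\int_\gamma^\delta g(t)^\beta dt=\int_0^b h(t)^\beta dt$; (iii) $\int_{\mathrm{g}_\alpha(h)}^\delta g(t)^\beta dt=\int_{\mathrm{g}_\alpha(h)}^b h(t)^\beta dt$. Moreover, $0\leq\gamma\leq\mathrm{g}_\alpha(h)\leq b\leq\delta$, and, extending $h$ by $0$ on $(b,\delta]$ and $g$ by $0$ on $[0,\gamma)$, one has $\int_s^\delta h(t)^\beta dt\leq\int_s^\delta g(t)^\beta dt$ for every $s\in[0,\delta]$. *)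

theory Defs
  imports "HOL-Analysis.Analysis"
begin

definition galpha :: "real \<Rightarrow> real \<Rightarrow> (real \<Rightarrow> real) \<Rightarrow> real" where
  "galpha \<alpha> b h = integral {0..b} (\<lambda>t. t * h t powr \<alpha>) / integral {0..b} (\<lambda>t. h t powr \<alpha>)"

end

theory Submission
  imports Defs
begin


lemma line_integral:
  fixes c d a \<beta> :: real
  assumes "c > 0" "a \<le> d" "\<beta> > 0"
  shows "((\<lambda>t. (c*(d-t)) powr \<beta>) has_integral (c powr \<beta> * (d-a) powr (\<beta>+1)/(\<beta>+1))) {a..d}"
proof -
  define F where "F t = - (c powr \<beta> * (d-t) powr (\<beta>+1)/(\<beta>+1))" for t
  have "((\<lambda>t. (c*(d-t)) powr \<beta>) has_integral (F d - F a)) {a..d}"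
  proof (rule fundamental_theorem_of_calculus_interior)
    show "a \<le> d" by fact
    show "continuous_on {a..d} F" unfolding F_def using assms
      by (intro continuous_intros continuous_on_powr') (auto intro!: continuous_intros)
    fix x assume x: "x \<in> {a<..<d}"
    have "(F has_real_derivative (c*(d-x)) powr \<beta>) (at x)"
      unfolding F_def using x assms
      by (auto intro!: derivative_eq_intros simp: powr_mult)
    then show "(F has_vector_derivative (c*(d-x)) powr \<beta>) (at x)"
      using has_real_derivative_iff_has_vector_derivative by blast
  qed
  moreover have "F d - F a = c powr \<beta> * (d-a) powr (\<beta>+1)/(\<beta>+1)"
    unfolding F_def using assms by simp
  ultimately show ?thesis by simp
qed

lemma bdd_cont_integrable:
  fixes f :: "real \<Rightarrow> real"
  assumes "continuous_on {a<..<b} f" "\<And>x. x\<in>{a<..<b} \<Longrightarrow> \<bar>f x\<bar> \<le> M"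
  shows "f integrable_on {a..b}"
proof -
  have "f absolutely_integrable_on {a<..<b}"
    apply (rule measurable_bounded_by_integrable_imp_absolutely_integrable[where g="\<lambda>_. M"])
    using assms continuous_imp_measurable_on_sets_lebesgue[OF assms(1)]
    by (auto simp: integrable_on_open_interval_real)
  then show ?thesis
    using absolutely_integrable_on_def integrable_on_open_interval_real by blast
qed

lemma chord_lower:
  fixes h :: "real \<Rightarrow> real"
  assumes "concave_on S h" "x \<in> S" "y \<in> S" "x < y" "x \<le> t" "t \<le> y"
  shows "h t \<ge> ((y-t)*h x + (t-x)*h y)/(y-x)"
proof -
  define l where "l = (t-x)/(y-x)"
  have l: "0 \<le> l" "l \<le> 1" using assms unfolding l_def by auto
  have "h ((1 - l) *\<^sub>R x + l *\<^sub>R y) \<ge> (1 - l) * h x + l * h y"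
    using concave_onD[OF assms(1) l assms(2,3)] .
  moreover have "x + l * (y - x) = t" using assms unfolding l_def by simp
  then have "(1 - l) *\<^sub>R x + l *\<^sub>R y = t" by (simp add: algebra_simps)
  moreover have "1 - l = (y-t)/(y-x)" using assms unfolding l_def by (simp add: divide_simps)
  then have "(1 - l) * h x + l * h y = ((y-t)*h x + (t-x)*h y)/(y-x)"
    unfolding l_def by (simp add: add_divide_distrib)
  ultimately show ?thesis by simp
qed

lemma chord_upper:
  fixes h :: "real \<Rightarrow> real"
  assumes "concave_on S h" "x \<in> S" "y \<in> S" "t \<in> S" "x < y" "y \<le> t"
  shows "h t \<le> h y + (h y - h x)/(y-x)*(t-y)"
proof (cases "y = t")
  case True then show ?thesis by simp
next
  case False
  then have "h y \<ge> ((t-y)*h x + (y-x)*h t)/(t-x)"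
    using chord_lower[OF assms(1,2,4), of y] assms by auto
  then have "(t-x) * h y \<ge> (t-y)*h x + (y-x)*h t" using assms False
    by (simp add: field_simps)
  moreover have "(y-x)*h y + (h y - h x)*(t-y) = (t-x)*h y - (t-y)*h x" by (simp add: algebra_simps)
  ultimately have "(h t - h y) * (y-x) \<le> (h y - h x)*(t-y)" by (simp add: algebra_simps)
  then have "h t - h y \<le> ((h y - h x)*(t-y))/(y-x)" using assms by (simp add: le_divide_eq)
  then show ?thesis by simp
qed

lemma posint:
  fixes f :: "real \<Rightarrow> real"
  assumes "b > 0" "f integrable_on {0..b}" "\<And>t. t \<in> {0..b} \<Longrightarrow> f t \<ge> 0"
    "\<And>t. t \<in> {b/4..3*b/4} \<Longrightarrow> f t \<ge> m" "m > 0"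
  shows "integral {0..b} f > 0"
proof -
  have i1: "f integrable_on {b/4..b}" using assms(1) by (intro integrable_on_subinterval[OF assms(2)]) auto
  have "integral {0..b/4} f + integral {b/4..b} f = integral {0..b} f"
    using assms by (intro Henstock_Kurzweil_Integration.integral_combine) auto
  moreover have "integral {b/4..3*b/4} f + integral {3*b/4..b} f = integral {b/4..b} f"
    using assms i1 by (intro Henstock_Kurzweil_Integration.integral_combine) auto
  moreover have "integral {0..b/4} f \<ge> 0"
    using assms by (intro integral_nonneg integrable_on_subinterval[OF assms(2)]) auto
  moreover have "integral {3*b/4..b} f \<ge> 0"
    using assms by (intro integral_nonneg integrable_on_subinterval[OF assms(2)]) auto
  moreover have "integral {b/4..3*b/4} f \<ge> integral {b/4..3*b/4} (\<lambda>_. m)"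
    using assms by (intro integral_le integrable_on_subinterval[OF assms(2)]) auto
  moreover have "integral {b/4..3*b/4} (\<lambda>_. m) = b/2 * m" using assms by simp
  moreover have "b/2*m > 0" using assms by simp
  ultimately show ?thesis by linarith
qed



theorem mainTheorem6:
  fixes b \<alpha> \<beta> :: real and h :: "real \<Rightarrow> real"
  assumes "b > 0"
    and "concave_on {0..b} h"
    and "\<forall>t\<in>{0..b}. h t \<ge> 0"
    and "\<exists>t\<in>{0..b}. h t \<noteq> 0"
    and "\<alpha> > 0" and "\<beta> > 0"
  shows "\<exists>\<gamma> \<delta> c::real. \<gamma> < \<delta> \<and> c > 0 \<and>
    c * (\<delta> - galpha \<alpha> b h) = h (galpha \<alpha> b h) \<and>
    integral {\<gamma>..\<delta>} (\<lambda>t. (c * (\<delta> - t)) powr \<beta>) = integral {0..b} (\<lambda>t. h t powr \<beta>) \<and>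
    integral {galpha \<alpha> b h..\<delta>} (\<lambda>t. (c * (\<delta> - t)) powr \<beta>)
      = integral {galpha \<alpha> b h..b} (\<lambda>t. h t powr \<beta>) \<and>
    0 \<le> \<gamma> \<and> \<gamma> \<le> galpha \<alpha> b h \<and> galpha \<alpha> b h \<le> b \<and> b \<le> \<delta> \<and>
    (\<forall>s\<in>{0..\<delta>}.
       integral {s..\<delta>} (\<lambda>t. (if t \<le> b then h t else 0) powr \<beta>)
       \<le> integral {s..\<delta>} (\<lambda>t. (if t < \<gamma> then 0 else c * (\<delta> - t)) powr \<beta>))"
proof -
  note conc = assms(2)
  have hnn: "\<And>t. t \<in> {0..b} \<Longrightarrow> h t \<ge> 0" using assms(3) by auto
  obtain t0 where t0: "t0 \<in> {0..b}" "h t0 > 0" using assms(3,4) by force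
  have hbd: "h t \<le> 2 * h (b/2)" if t: "t \<in> {0..b}" for t
  proof -
    have e: "t/2 + (b-t)/2 = b/2" by (simp add: field_simps)
    have "h ((1 - 1/2) *\<^sub>R t + (1/2) *\<^sub>R (b-t)) \<ge> (1-1/2)*h t + (1/2)*h(b-t)"
      by (rule concave_onD[OF conc]) (use t in auto)
    then have "h (b/2) \<ge> h t/2 + h(b-t)/2" by (simp add: e)
    moreover have "h (b-t) \<ge> 0" using hnn t by auto
    ultimately show ?thesis by linarith
  qed
  have hlow: "h t \<ge> h t0 * (if t \<le> t0 then t/t0 else (b-t)/(b-t0))" if t: "t \<in> {0..b}" for t
  proof (cases "t \<le> t0")
    case True
    show ?thesis
    proof (cases "t0 = 0")
      case True then show ?thesis using \<open>t \<le> t0\<close> t hnn by auto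
    next
      case False
      then have "h t \<ge> ((t0-t)*h 0 + (t-0)*h t0)/(t0-0)"
        using t t0 True by (intro chord_lower[OF conc]) auto
      moreover have "((t0-t)*h 0 + (t-0)*h t0)/(t0-0) \<ge> (t*h t0)/t0"
        using t t0 True False hnn[of 0] assms(1)
        by (simp, intro divide_right_mono) auto
      ultimately show ?thesis using True by (simp add: mult.commute)
    qed
  next
    case False
    then have "h t \<ge> ((b-t)*h t0 + (t-t0)*h b)/(b-t0)"
      using t t0 by (intro chord_lower[OF conc]) auto
    moreover have "((b-t)*h t0 + (t-t0)*h b)/(b-t0) \<ge> ((b-t)*h t0)/(b-t0)"
      using t t0 False hnn[of b] assms(1)
      by (simp, intro divide_right_mono) auto
    ultimately show ?thesis using False by (simp add: mult.commute)
  qed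
  have hint: "h t > 0" if t: "t \<in> {0<..<b}" for t
  proof -
    have "h t0 * (if t \<le> t0 then t/t0 else (b-t)/(b-t0)) > 0"
      using t t0 by auto
    then show ?thesis using hlow[of t] t by auto
  qed
  have hmid: "h t \<ge> h t0 / 4" if t: "t \<in> {b/4..3*b/4}" for t
  proof -
    have "(if t \<le> t0 then t/t0 else (b-t)/(b-t0)) \<ge> 1/4"
    proof (cases "t \<le> t0")
      case True
      then have "t0 > 0" using t assms(1) by auto
      then show ?thesis using True t t0 by (simp add: field_simps)
    next
      case False
      then have "b - t0 > 0" using t by auto
      then show ?thesis using False t t0 by (simp add: field_simps)
    qed
    then have "h t0 * (if t \<le> t0 then t/t0 else (b-t)/(b-t0)) \<ge> h t0 * (1/4)"
      using t0 by (intro mult_left_mono) auto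
    then show ?thesis using hlow[of t] t assms(1) by auto
  qed
  have hcont: "continuous_on {0<..<b} h"
  proof -
    have "convex_on {0<..<b} (\<lambda>x. - h x)" using conc unfolding concave_on_def
      by (rule convex_on_subset) auto
    then have "continuous_on {0<..<b} (\<lambda>x. - h x)"
      by (intro convex_on_continuous) auto
    then have "continuous_on {0<..<b} (\<lambda>x. - (- h x))" by (rule continuous_on_minus)
    then show ?thesis by simp
  qed
  have pcont: "continuous_on {0<..<b} (\<lambda>t. h t powr p)" for p
    using hcont hint by (intro continuous_on_powr') (force intro: continuous_intros less_imp_le)+
  have intP: "(\<lambda>t. h t powr p) integrable_on {0..b}" if p: "p > 0" for p
  proof (rule bdd_cont_integrable[OF pcont, where M = "(2 * h (b/2)) powr p"])
    fix t :: real assume t: "t \<in> {0<..<b}"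
    have "h t powr p \<le> (2 * h (b/2)) powr p"
      using hbd[of t] hnn[of t] t p by (intro powr_mono2) auto
    then show "\<bar>h t powr p\<bar> \<le> (2 * h (b/2)) powr p" by simp
  qed
  have intT: "(\<lambda>t. t * h t powr \<alpha>) integrable_on {0..b}"
  proof (rule bdd_cont_integrable[where M = "b * (2 * h (b/2)) powr \<alpha>"])
    show "continuous_on {0<..<b} (\<lambda>t. t * h t powr \<alpha>)"
      by (intro continuous_intros pcont)
    fix t :: real assume t: "t \<in> {0<..<b}"
    have "h t powr \<alpha> \<le> (2 * h (b/2)) powr \<alpha>"
      using hbd[of t] hnn[of t] t assms(5) by (intro powr_mono2) auto
    then have "t * h t powr \<alpha> \<le> b * (2 * h (b/2)) powr \<alpha>"
      using t by (intro mult_mono) auto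
    then show "\<bar>t * h t powr \<alpha>\<bar> \<le> b * (2 * h (b/2)) powr \<alpha>" using t by simp
  qed
  have intTb: "(\<lambda>t. (b - t) * h t powr \<alpha>) integrable_on {0..b}"
  proof (rule bdd_cont_integrable[where M = "b * (2 * h (b/2)) powr \<alpha>"])
    show "continuous_on {0<..<b} (\<lambda>t. (b - t) * h t powr \<alpha>)"
      by (intro continuous_intros pcont)
    fix t :: real assume t: "t \<in> {0<..<b}"
    have "h t powr \<alpha> \<le> (2 * h (b/2)) powr \<alpha>"
      using hbd[of t] hnn[of t] t assms(5) by (intro powr_mono2) auto
    then have "(b - t) * h t powr \<alpha> \<le> b * (2 * h (b/2)) powr \<alpha>"
      using t by (intro mult_mono) auto
    then show "\<bar>(b - t) * h t powr \<alpha>\<bar> \<le> b * (2 * h (b/2)) powr \<alpha>" using t by simp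
  qed
  define I0 where "I0 = integral {0..b} (\<lambda>t. h t powr \<alpha>)"
  define I1 where "I1 = integral {0..b} (\<lambda>t. t * h t powr \<alpha>)"
  have mpos: "(h t0 / 4) powr \<alpha> > 0" using t0 by simp
  have mle: "(h t0 / 4) powr \<alpha> \<le> h t powr \<alpha>" if "t \<in> {b/4..3*b/4}" for t
    using hmid[OF that] t0 assms(5) by (intro powr_mono2) auto
  have I0pos: "I0 > 0" unfolding I0_def
    by (rule posint[OF assms(1) intP[OF assms(5)] _ mle mpos]) auto
  have I1pos: "I1 > 0" unfolding I1_def
  proof (rule posint[OF assms(1) intT, where m = "b/4 * (h t0 / 4) powr \<alpha>"])
    fix t assume t: "t \<in> {b/4..3*b/4}"
    show "b/4 * (h t0 / 4) powr \<alpha> \<le> t * h t powr \<alpha>"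
      using t mle[OF t] mpos by (intro mult_mono) auto
  qed (use assms(1) mpos in auto)
  have I2pos: "integral {0..b} (\<lambda>t. (b - t) * h t powr \<alpha>) > 0"
  proof (rule posint[OF assms(1) intTb, where m = "b/4 * (h t0 / 4) powr \<alpha>"])
    fix t assume t: "t \<in> {b/4..3*b/4}"
    show "b/4 * (h t0 / 4) powr \<alpha> \<le> (b - t) * h t powr \<alpha>"
      using t mle[OF t] mpos by (intro mult_mono) auto
  qed (use assms(1) mpos in auto)
  have "integral {0..b} (\<lambda>t. (b - t) * h t powr \<alpha>) = integral {0..b} (\<lambda>t. b * h t powr \<alpha> - t * h t powr \<alpha>)"
    by (simp add: algebra_simps)
  also have "\<dots> = b * I0 - I1" unfolding I0_def I1_def
    using intT intP[OF assms(5)] integrable_on_cmult_left[OF intP[OF assms(5)], of b]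
    by (subst Henstock_Kurzweil_Integration.integral_diff) auto
  finally have I2: "b * I0 - I1 > 0" using I2pos by simp
  define g where "g = galpha \<alpha> b h"
  have g_def': "g = I1 / I0" unfolding g_def galpha_def I0_def I1_def ..
  have g0: "0 < g" unfolding g_def' using I0pos I1pos by simp
  have gb: "g < b" unfolding g_def' using I0pos I2 by (simp add: divide_less_eq)
  have hg: "h g > 0" using hint g0 gb by auto
  define P where "P = (\<lambda>t. h t powr \<beta>)"
  have intPb: "P integrable_on {0..b}" unfolding P_def using intP[OF assms(6)] .
  have Pnn: "P t \<ge> 0" for t unfolding P_def by simp
  have intPsub: "P integrable_on {x..y}" if "0 \<le> x" "y \<le> b" for x y
    using integrable_on_subinterval[OF intPb] that by auto
  define A where "A = integral {0..g} P"
  define B where "B = integral {g..b} P"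
  have AB: "A + B = integral {0..b} P" unfolding A_def B_def
    using g0 gb intPb by (intro Henstock_Kurzweil_Integration.integral_combine) auto
  have A0: "A \<ge> 0" unfolding A_def using gb by (intro integral_nonneg intPsub Pnn) auto
  define c0 where "c0 = h g / (b - g)"
  have c0pos: "c0 > 0" unfolding c0_def using hg gb by simp
  have c0le: "c0 * (b - t) \<le> h t" if t: "t \<in> {g..b}" for t
  proof (cases "t = b")
    case True then show ?thesis using hnn[of b] assms(1) by simp
  next
    case False
    have "h t \<ge> ((b-t)*h g + (t-g)*h b)/(b-g)"
      using t g0 gb by (intro chord_lower[OF conc]) auto
    moreover have "((b-t)*h g + (t-g)*h b)/(b-g) \<ge> ((b-t)*h g)/(b-g)"
      using t gb hnn[of b] assms(1) by (intro divide_right_mono) auto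
    ultimately show ?thesis unfolding c0_def by (simp add: mult.commute)
  qed
  have li0: "((\<lambda>t. (c0*(b-t)) powr \<beta>) has_integral (c0 powr \<beta> * (b-g) powr (\<beta>+1)/(\<beta>+1))) {g..b}"
    using line_integral[OF c0pos _ assms(6)] gb by simp
  have "c0 powr \<beta> * (b-g) powr (\<beta>+1) = h g powr \<beta> * (b-g)"
    unfolding c0_def using hg gb by (simp add: powr_divide powr_add)
  then have "integral {g..b} (\<lambda>t. (c0*(b-t)) powr \<beta>) = h g powr \<beta> * (b-g) / (\<beta>+1)"
    using li0 by (simp add: integral_unique)
  moreover have "integral {g..b} (\<lambda>t. (c0*(b-t)) powr \<beta>) \<le> B" unfolding B_def P_def
    using li0 intPsub[of g b] g0 c0le c0pos assms(6) unfolding P_def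
    by (intro integral_le) (auto intro!: powr_mono2)
  ultimately have Blow: "h g powr \<beta> * (b-g) / (\<beta>+1) \<le> B" by simp
  have Bpos: "B > 0"
    using Blow hg gb assms(6) by (smt (verit) divide_pos_pos mult_pos_pos powr_gt_zero)
  define u where "u = (\<beta>+1) * B / h g powr \<beta>"
  define c where "c = h g / u"
  define \<delta> where "\<delta> = g + u"
  have upos: "u > 0" unfolding u_def using Bpos assms(6) hg by simp
  have cpos: "c > 0" unfolding c_def using upos hg by simp
  have hc: "c * (\<delta> - g) = h g" unfolding c_def \<delta>_def using upos by simp
  have ub: "b - g \<le> u" unfolding u_def using Blow hg assms(6)
    by (simp add: field_simps)
  have b\<delta>: "b \<le> \<delta>" unfolding \<delta>_def using ub by simp
  define L where "L = (\<lambda>t. (c * (\<delta> - t)) powr \<beta>)"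
  have Lhas: "(L has_integral (c powr \<beta> * (\<delta>-a) powr (\<beta>+1)/(\<beta>+1))) {a..\<delta>}" if "a \<le> \<delta>" for a
    unfolding L_def using line_integral[OF cpos that assms(6)] .
  have Lint: "L integrable_on {x..y}" if "x \<le> y" "y \<le> \<delta>" for x y
    using integrable_on_subinterval[OF has_integral_integrable[OF Lhas[of x]]] that by auto
  have Lnn: "L t \<ge> 0" for t unfolding L_def by simp
  have BX: "B = h g powr (\<beta>+1) / (\<beta>+1) / c"
  proof -
    have uc: "u = h g / c" unfolding c_def using upos hg by simp
    have "B = h g powr \<beta> * u / (\<beta>+1)" unfolding u_def using hg assms(6) by simp
    then show ?thesis unfolding uc using hg by (simp add: powr_add mult.commute)
  qed
  have IgL: "integral {g..\<delta>} L = B"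
  proof -
    have "c powr \<beta> * (\<delta>-g) powr (\<beta>+1) = h g powr \<beta> * u"
      unfolding \<delta>_def c_def using upos hg by (simp add: powr_divide powr_add)
    then show ?thesis using integral_unique[OF Lhas[of g]] upos assms(6) hg unfolding \<delta>_def u_def
      by simp
  qed
  have keyc: "h t \<le> c * (\<delta> - t)" if t: "t \<in> {0..g}" for t
  proof (rule ccontr)
    assume neg: "\<not> h t \<le> c * (\<delta> - t)"
    then have tg: "t < g" using hc t by (cases "t = g") auto
    define k where "k = (h t - h g) / (g - t)"
    have "h t - h g > c * (g - t)" using neg hc by (simp add: algebra_simps)
    then have kc: "k > c" unfolding k_def using tg by (simp add: less_divide_eq)
    then have kpos: "k > 0" using cpos by simp
    define \<delta>' where "\<delta>' = g + h g / k"
    have up: "h s \<le> k * (\<delta>' - s)" if s: "s \<in> {g..b}" for s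
    proof -
      have "h s \<le> h g + (h g - h t)/(g - t)*(s - g)"
        using s t tg g0 by (intro chord_upper[OF conc]) auto
      also have "(h g - h t)/(g - t) = - k" unfolding k_def by (metis minus_diff_eq minus_divide_left)
      finally show ?thesis unfolding \<delta>'_def using kpos by (simp add: algebra_simps)
    qed
    have b\<delta>': "b \<le> \<delta>'"
    proof -
      have "0 \<le> k * (\<delta>' - b)" using up[of b] hnn[of b] gb assms(1) by auto
      then show ?thesis using kpos by (simp add: zero_le_mult_iff)
    qed
    have g\<delta>': "g \<le> \<delta>'" using b\<delta>' gb by simp
    have Lk: "((\<lambda>s. (k * (\<delta>' - s)) powr \<beta>) has_integral (k powr \<beta> * (\<delta>'-g) powr (\<beta>+1)/(\<beta>+1))) {g..\<delta>'}"
      using line_integral[OF kpos g\<delta>' assms(6)] .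
    have "B \<le> integral {g..b} (\<lambda>s. (k * (\<delta>' - s)) powr \<beta>)" unfolding B_def P_def
      using integrable_on_subinterval[OF has_integral_integrable[OF Lk], of g b]
        intPsub[of g b] g0 b\<delta>' up hnn assms(6) unfolding P_def
      by (intro integral_le) (auto intro!: powr_mono2)
    also have "\<dots> \<le> integral {g..\<delta>'} (\<lambda>s. (k * (\<delta>' - s)) powr \<beta>)"
    proof -
      have "integral {g..b} (\<lambda>s. (k * (\<delta>' - s)) powr \<beta>) + integral {b..\<delta>'} (\<lambda>s. (k * (\<delta>' - s)) powr \<beta>)
           = integral {g..\<delta>'} (\<lambda>s. (k * (\<delta>' - s)) powr \<beta>)"
        using gb b\<delta>' has_integral_integrable[OF Lk]
        by (intro Henstock_Kurzweil_Integration.integral_combine) auto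
      moreover have "integral {b..\<delta>'} (\<lambda>s. (k * (\<delta>' - s)) powr \<beta>) \<ge> 0"
        using integrable_on_subinterval[OF has_integral_integrable[OF Lk], of b \<delta>'] gb
        by (intro integral_nonneg) auto
      ultimately show ?thesis by linarith
    qed
    also have "\<dots> = h g powr (\<beta>+1) / (\<beta>+1) / k"
    proof -
      have "k powr \<beta> * (\<delta>'-g) powr (\<beta>+1) = h g powr (\<beta>+1) / k"
        unfolding \<delta>'_def using kpos hg by (simp add: powr_divide powr_add)
      then show ?thesis using integral_unique[OF Lk] by simp
    qed
    also have "\<dots> < h g powr (\<beta>+1) / (\<beta>+1) / c"
      using kc cpos hg assms(6) by (intro divide_strict_left_mono) auto
    finally show False using BX by simp
  qed
  have g\<delta>: "g < \<delta>" unfolding \<delta>_def using upos by simp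
  have \<delta>pos: "\<delta> > 0" using g\<delta> g0 by simp
  have Lle: "P t \<le> L t" if "t \<in> {0..g}" for t
    unfolding P_def L_def using keyc[OF that] hnn[of t] that gb assms(6)
    by (intro powr_mono2) auto
  have IL0g: "A \<le> integral {0..g} L" unfolding A_def
    using intPsub[of 0 g] Lint[of 0 g] g0 gb g\<delta> Lle by (intro integral_le) auto
  have IL0\<delta>: "integral {0..g} L + integral {g..\<delta>} L = integral {0..\<delta>} L"
    using g0 g\<delta> Lint[of 0 \<delta>] by (intro Henstock_Kurzweil_Integration.integral_combine) auto
  have C0: "integral {0..\<delta>} L = c powr \<beta> * \<delta> powr (\<beta>+1)/(\<beta>+1)"
    using integral_unique[OF Lhas[of 0]] \<delta>pos by simp
  have CB: "c powr \<beta> * (\<delta> - g) powr (\<beta>+1)/(\<beta>+1) = B"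
    using integral_unique[OF Lhas[of g]] g\<delta> IgL by simp
  have ABpos: "A + B > 0" using A0 Bpos by simp
  define w where "w = ((\<beta>+1)*(A+B)/c powr \<beta>) powr (1/(\<beta>+1))"
  have wpos: "w > 0" unfolding w_def using ABpos cpos assms(6) by simp
  have wp: "w powr (\<beta>+1) = (\<beta>+1)*(A+B)/c powr \<beta>" unfolding w_def
    using ABpos cpos assms(6) by (simp add: powr_powr)
  have Lw: "c powr \<beta> * w powr (\<beta>+1)/(\<beta>+1) = A + B"
    unfolding wp using cpos assms(6) by simp
  have mono: "c powr \<beta> * x powr (\<beta>+1)/(\<beta>+1) < c powr \<beta> * y powr (\<beta>+1)/(\<beta>+1)"
    if "0 \<le> x" "x < y" for x y
  proof -
    have "x powr (\<beta>+1) < y powr (\<beta>+1)" using that assms(6) by (intro powr_less_mono2) auto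
    then show ?thesis using cpos assms(6) by (intro divide_strict_right_mono) auto
  qed
  define \<gamma> where "\<gamma> = \<delta> - w"
  have \<gamma>\<delta>: "\<gamma> < \<delta>" unfolding \<gamma>_def using wpos by simp
  have I\<gamma>: "integral {\<gamma>..\<delta>} L = A + B"
    using integral_unique[OF Lhas[of \<gamma>]] \<gamma>\<delta> Lw unfolding \<gamma>_def by simp
  have \<gamma>0: "0 \<le> \<gamma>"
  proof (rule ccontr)
    assume "\<not> 0 \<le> \<gamma>"
    then have "\<delta> < w" unfolding \<gamma>_def by simp
    then have "integral {0..\<delta>} L < A + B" using mono[of \<delta> w] \<delta>pos C0 Lw by simp
    then show False using IL0g IL0\<delta> IgL by simp
  qed
  have \<gamma>g: "\<gamma> \<le> g"
  proof (rule ccontr)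
    assume "\<not> \<gamma> \<le> g"
    then have "w < \<delta> - g" unfolding \<gamma>_def by simp
    then have "A + B < B" using mono[of w "\<delta> - g"] wpos CB Lw by simp
    then show False using A0 by simp
  qed
  define H where "H = (\<lambda>t. (if t \<le> b then h t else 0) powr \<beta>)"
  define G where "G = (\<lambda>t. (if t < \<gamma> then 0 else c * (\<delta> - t)) powr \<beta>)"
  have Hnn: "H t \<ge> 0" for t unfolding H_def by simp
  have Gnn: "G t \<ge> 0" for t unfolding G_def by simp
  have Hb0: "(H has_integral 0) {b..\<delta>}"
    by (rule has_integral_spike[of "{b}" _ _ "\<lambda>_. 0"]) (auto simp: H_def)
  have G0: "(G has_integral 0) {0..\<gamma>}"
    by (rule has_integral_spike[of "{\<gamma>}" _ _ "\<lambda>_. 0"]) (auto simp: G_def)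
  have intH: "H integrable_on {0..\<delta>}"
  proof (rule Henstock_Kurzweil_Integration.integrable_combine[of 0 b])
    show "H integrable_on {0..b}"
      by (rule integrable_eq[OF intPb]) (auto simp: H_def P_def)
    show "H integrable_on {b..\<delta>}" using Hb0 by blast
  qed (use assms(1) b\<delta> in auto)
  have intG: "G integrable_on {0..\<delta>}"
  proof (rule Henstock_Kurzweil_Integration.integrable_combine[of 0 \<gamma>])
    show "G integrable_on {0..\<gamma>}" using G0 by blast
    show "G integrable_on {\<gamma>..\<delta>}"
      by (rule integrable_eq[OF Lint[of \<gamma> \<delta>]]) (use \<gamma>\<delta> in \<open>auto simp: G_def L_def\<close>)
  qed (use \<gamma>0 \<gamma>\<delta> in auto)
  have intHs: "H integrable_on {x..y}" if "0 \<le> x" "y \<le> \<delta>" for x y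
    using integrable_on_subinterval[OF intH] that by auto
  have intGs: "G integrable_on {x..y}" if "0 \<le> x" "y \<le> \<delta>" for x y
    using integrable_on_subinterval[OF intG] that by auto
  have IHg\<delta>: "integral {g..\<delta>} H = B"
  proof -
    have "integral {g..b} H + integral {b..\<delta>} H = integral {g..\<delta>} H"
      using gb b\<delta> g0 intHs[of g \<delta>] by (intro Henstock_Kurzweil_Integration.integral_combine) auto
    moreover have "integral {g..b} H = integral {g..b} P"
      by (rule Henstock_Kurzweil_Integration.integral_cong) (auto simp: H_def P_def)
    moreover have "integral {b..\<delta>} H = 0" using Hb0 by (rule integral_unique)
    ultimately show ?thesis unfolding B_def by simp
  qed
  have IGg\<delta>: "integral {g..\<delta>} G = B"
  proof -
    have "integral {g..\<delta>} G = integral {g..\<delta>} L"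
      by (rule Henstock_Kurzweil_Integration.integral_cong) (use \<gamma>g in \<open>auto simp: G_def L_def\<close>)
    then show ?thesis using IgL by simp
  qed
  have IG0g: "integral {0..g} G = A"
  proof -
    have "integral {0..\<gamma>} G + integral {\<gamma>..g} G = integral {0..g} G"
      using \<gamma>0 \<gamma>g g\<delta> intGs[of 0 g] by (intro Henstock_Kurzweil_Integration.integral_combine) auto
    moreover have "integral {0..\<gamma>} G = 0" using G0 by (rule integral_unique)
    moreover have "integral {\<gamma>..g} G = integral {\<gamma>..g} L"
      by (rule Henstock_Kurzweil_Integration.integral_cong) (auto simp: G_def L_def)
    moreover have "integral {\<gamma>..g} L + integral {g..\<delta>} L = integral {\<gamma>..\<delta>} L"
      using \<gamma>g g\<delta> Lint[of \<gamma> \<delta>] \<gamma>\<delta> by (intro Henstock_Kurzweil_Integration.integral_combine) auto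
    ultimately show ?thesis using I\<gamma> IgL by simp
  qed
  have dom: "integral {s..\<delta>} H \<le> integral {s..\<delta>} G" if s: "s \<in> {0..\<delta>}" for s
  proof (cases "g \<le> s")
    case True
    have cH: "integral {g..s} H + integral {s..\<delta>} H = integral {g..\<delta>} H"
      using True s g0 intHs[of g \<delta>] by (intro Henstock_Kurzweil_Integration.integral_combine) auto
    have cG: "integral {g..s} G + integral {s..\<delta>} G = integral {g..\<delta>} G"
      using True s g0 intGs[of g \<delta>] by (intro Henstock_Kurzweil_Integration.integral_combine) auto
    show ?thesis
    proof (cases "\<forall>s'\<in>{s..\<delta>}. H s' \<le> G s'")
      case True
      then show ?thesis using intHs[of s \<delta>] intGs[of s \<delta>] s by (intro integral_le) auto
    next
      case False
      then obtain s' where s': "s' \<in> {s..\<delta>}" "H s' > G s'" by force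
      have s'b: "s' \<le> b"
      proof (rule ccontr)
        assume "\<not> s' \<le> b" then have "H s' = 0" unfolding H_def by simp
        then show False using s' Gnn[of s'] by simp
      qed
      have Gs': "G s' = L s'" unfolding G_def L_def using s' True \<gamma>g by auto
      have hs': "h s' > c * (\<delta> - s')"
      proof (rule ccontr)
        assume "\<not> h s' > c * (\<delta> - s')"
        then have "H s' \<le> L s'" unfolding H_def L_def using s'b hnn[of s'] s' True g0 assms(6)
          by (auto intro!: powr_mono2)
        then show False using s' Gs' by simp
      qed
      have s'g: "s' > g" using hs' hc s' True by (cases "s' = g") auto
      have GH: "G t \<le> H t" if t: "t \<in> {g..s}" for t
      proof -
        have "h t \<ge> ((s'-t)*h g + (t-g)*h s')/(s'-g)"
          using t s' s'g s'b g0 by (intro chord_lower[OF conc]) auto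
        moreover have "((s'-t)*h g + (t-g)*h s')/(s'-g) \<ge> ((s'-t)*(c*(\<delta>-g)) + (t-g)*(c*(\<delta>-s')))/(s'-g)"
          using t s' s'g hs' hc by (intro divide_right_mono add_mono mult_left_mono) auto
        moreover have "((s'-t)*(c*(\<delta>-g)) + (t-g)*(c*(\<delta>-s')))/(s'-g) = c*(\<delta>-t)"
          using s'g by (simp add: field_simps)
        ultimately have "h t \<ge> c * (\<delta> - t)" by simp
        moreover have "c * (\<delta> - t) \<ge> 0" using cpos t s' by auto
        ultimately show ?thesis unfolding G_def H_def using t s' s'b \<gamma>g assms(6)
          by (auto intro!: powr_mono2)
      qed
      have "integral {g..s} G \<le> integral {g..s} H"
        using intHs[of g s] intGs[of g s] GH g0 s by (intro integral_le) auto
      then show ?thesis using cH cG IHg\<delta> IGg\<delta> by simp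
    qed
  next
    case False
    have cH: "integral {s..g} H + integral {g..\<delta>} H = integral {s..\<delta>} H"
      using False s g\<delta> intHs[of s \<delta>] by (intro Henstock_Kurzweil_Integration.integral_combine) auto
    have cG: "integral {s..g} G + integral {g..\<delta>} G = integral {s..\<delta>} G"
      using False s g\<delta> intGs[of s \<delta>] by (intro Henstock_Kurzweil_Integration.integral_combine) auto
    have "integral {s..g} H \<le> integral {s..g} G"
    proof (cases "\<gamma> \<le> s")
      case True
      have "H t \<le> G t" if t: "t \<in> {s..g}" for t
        using Lle[of t] t True s gb unfolding H_def G_def P_def L_def by auto
      then show ?thesis using intHs[of s g] intGs[of s g] s g\<delta> by (intro integral_le) auto
    next
      case False
      have "integral {0..s} H + integral {s..g} H = integral {0..g} H"
        using \<open>\<not> g \<le> s\<close> s g\<delta> intHs[of 0 g] by (intro Henstock_Kurzweil_Integration.integral_combine) auto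
      moreover have "integral {0..g} H = A" unfolding A_def
        by (rule Henstock_Kurzweil_Integration.integral_cong) (use gb in \<open>auto simp: H_def P_def\<close>)
      moreover have "integral {0..s} G + integral {s..g} G = integral {0..g} G"
        using \<open>\<not> g \<le> s\<close> s g\<delta> intGs[of 0 g] by (intro Henstock_Kurzweil_Integration.integral_combine) auto
      moreover have "integral {0..s} G = integral {0..s} (\<lambda>_. 0::real)"
        by (rule Henstock_Kurzweil_Integration.integral_cong) (use False in \<open>auto simp: G_def\<close>)
      moreover have "integral {0..s} H \<ge> 0" using intHs[of 0 s] s Hnn by (intro integral_nonneg) auto
      ultimately show ?thesis using IG0g by simp
    qed
    then show ?thesis using cH cG IHg\<delta> IGg\<delta> by simp
  qed
  show ?thesis
  proof (rule exI[of _ \<gamma>], rule exI[of _ \<delta>], rule exI[of _ c], intro conjI)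
    show "\<gamma> < \<delta>" by fact
    show "c > 0" by fact
    show "c * (\<delta> - galpha \<alpha> b h) = h (galpha \<alpha> b h)" using hc unfolding g_def .
    show "integral {\<gamma>..\<delta>} (\<lambda>t. (c * (\<delta> - t)) powr \<beta>) = integral {0..b} (\<lambda>t. h t powr \<beta>)"
      using I\<gamma> AB unfolding L_def P_def by simp
    show "integral {galpha \<alpha> b h..\<delta>} (\<lambda>t. (c * (\<delta> - t)) powr \<beta>)
      = integral {galpha \<alpha> b h..b} (\<lambda>t. h t powr \<beta>)"
      using IgL unfolding L_def B_def P_def g_def .
    show "0 \<le> \<gamma>" by fact
    show "\<gamma> \<le> galpha \<alpha> b h" using \<gamma>g unfolding g_def .
    show "galpha \<alpha> b h \<le> b" using gb unfolding g_def by simp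
    show "b \<le> \<delta>" by fact
    show "\<forall>s\<in>{0..\<delta>}.
       integral {s..\<delta>} (\<lambda>t. (if t \<le> b then h t else 0) powr \<beta>)
       \<le> integral {s..\<delta>} (\<lambda>t. (if t < \<gamma> then 0 else c * (\<delta> - t)) powr \<beta>)"
      using dom unfolding H_def G_def by blast
  qed
qed

end
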